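(* Let $X$ be a topological vector space over $\mathbb{K}$ ($\mathbb{K}=\mathbb{R}$ or $\mathbb{C}$), let $Y$ be a linear subspace of $X$, and let $\alpha$ be a cardinal with $w(X)\le \mathrm{codim}(Y)=\alpha$. Then $X\setminus Y$ is $\alpha$-dense-lineable in $X$, i.e., there is a dense linear subspace $Z$ of $X$ with $\dim(Z)=\alpha$ and $Z\subset (X\setminus Y)\cup\{0\}$.
   Context: A topological vector space is a vector space with a topology making addition and scalar multiplication continuous. The weight $w(X)$ of a topological space $X$ is the smallest cardinality of a base for its topology. $\mathrm{codim}(Y)$ denotes the dimension of the quotient $X/Y$. *)

theory Defs
  imports "HOL-Analysis.Analysis"
begin


definition tvs :: "('k::{field,topological_space} \<Rightarrow> 'v::{ab_group_add,topological_space} \<Rightarrow> 'v) \<Rightarrow> bool" where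
  "tvs sm \<longleftrightarrow> vector_space sm
     \<and> continuous_on UNIV (\<lambda>p::'v \<times> 'v. fst p + snd p)
     \<and> continuous_on UNIV (\<lambda>p::'k \<times> 'v. sm (fst p) (snd p))"

text \<open>w(X) \<le> |A|: the weight (least cardinality of a base) is at most |A|, i.e.
  there is a base of the topology of cardinality at most |A|.\<close>
definition weight_le :: "'c set \<Rightarrow> 'v::topological_space itself \<Rightarrow> bool" where
  "weight_le A _ \<longleftrightarrow> (\<exists>\<B>::'v set set. topological_basis \<B> \<and> (card_of \<B>, card_of A) \<in> ordLeq)"

text \<open>B is (a set of representatives of) a basis of the quotient X/Y:
  linearly independent modulo Y and spanning X together with Y.\<close>
definition quotient_basis :: "('k::field \<Rightarrow> 'v::ab_group_add \<Rightarrow> 'v) \<Rightarrow> 'v set \<Rightarrow> 'v set \<Rightarrow> bool" where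
  "quotient_basis sm Y B \<longleftrightarrow>
     (\<forall>F c. finite F \<and> F \<subseteq> B \<and> (\<Sum>b\<in>F. sm (c b) b) \<in> Y \<longrightarrow> (\<forall>b\<in>F. c b = 0))
     \<and> module.span sm (Y \<union> B) = UNIV"

definition codim_eq :: "('k::field \<Rightarrow> 'v::ab_group_add \<Rightarrow> 'v) \<Rightarrow> 'v set \<Rightarrow> 'c set \<Rightarrow> bool" where
  "codim_eq sm Y A \<longleftrightarrow> (\<exists>B. quotient_basis sm Y B \<and> (card_of B, card_of A) \<in> ordIso)"

definition dim_eq :: "('k::field \<Rightarrow> 'v::ab_group_add \<Rightarrow> 'v) \<Rightarrow> 'v set \<Rightarrow> 'c set \<Rightarrow> bool" where
  "dim_eq sm Z A \<longleftrightarrow> (\<exists>B. \<not> module.dependent sm B \<and> module.span sm B = Z \<and> (card_of B, card_of A) \<in> ordIso)"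

definition dense_lineable :: "('k::field \<Rightarrow> 'v::{ab_group_add,topological_space} \<Rightarrow> 'v) \<Rightarrow> 'c set \<Rightarrow> 'v set \<Rightarrow> bool" where
  "dense_lineable sm A S \<longleftrightarrow>
     (\<exists>Z. module.subspace sm Z \<and> closure Z = UNIV \<and> dim_eq sm Z A \<and> Z \<subseteq> S \<union> {0})"

end

theory Submission
  imports Defs
begin
unbundle cardinal_syntax

lemma tvs_open_subspace:
  fixes sm :: "'k::{field,perfect_space} \<Rightarrow> 'v::{ab_group_add,topological_space} \<Rightarrow> 'v"
  assumes tv: "tvs sm" and W: "module.subspace sm W" and U: "open U" "u \<in> U" "U \<subseteq> W"
  shows "W = UNIV"
proof -
  interpret V: vector_space sm using tv unfolding tvs_def by auto
  have cadd: "continuous_on UNIV (\<lambda>p::'v \<times> 'v. fst p + snd p)"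
   and csm: "continuous_on UNIV (\<lambda>p::'k \<times> 'v. sm (fst p) (snd p))" using tv unfolding tvs_def by auto
  have uW: "u \<in> W" using U by auto
  show ?thesis
  proof (intro set_eqI iffI)
    fix x :: 'v
    define g where "g = (\<lambda>t::'k. u + sm t x)"
    have c1: "continuous_on UNIV (\<lambda>t::'k. sm t x)"
    proof -
      have "continuous_on UNIV ((\<lambda>p::'k \<times> 'v. sm (fst p) (snd p)) \<circ> (\<lambda>t. (t, x)))"
        by (rule continuous_on_compose) (auto intro!: continuous_on_Pair continuous_on_id continuous_on_const
           intro: continuous_on_subset[OF csm])
      then show ?thesis by (simp add: comp_def)
    qed
    have "continuous_on UNIV ((\<lambda>p::'v \<times> 'v. fst p + snd p) \<circ> (\<lambda>t::'k. (u, sm t x)))"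
      by (rule continuous_on_compose) (auto intro!: continuous_on_Pair c1 continuous_on_const
           intro: continuous_on_subset[OF cadd])
    then have cg: "continuous_on UNIV g" by (simp add: comp_def g_def)
    have o: "open (g -` U)" using continuous_on_open_vimage[OF open_UNIV] cg U(1) by auto
    have "0 \<in> g -` U" using U(2) by (simp add: g_def)
    moreover have "g -` U \<noteq> {0}" using o not_open_singleton[of "0::'k"] by metis
    ultimately obtain t where t: "t \<in> g -` U" "t \<noteq> 0" by blast
    then have "u + sm t x \<in> W" using U(3) by (auto simp: g_def)
    then have "(u + sm t x) - u \<in> W" using V.subspace_diff[OF W _ uW] by blast
    then have "sm t x \<in> W" by simp
    then have "sm (inverse t) (sm t x) \<in> W" using V.subspace_scale[OF W] by blast
    then show "x \<in> W" using t(2) by simp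
  qed auto
qed

lemma indep_card_le:
  fixes sm :: "'k::field \<Rightarrow> 'v::ab_group_add \<Rightarrow> 'v"
  assumes "vector_space sm" "\<not> module.dependent sm B" "B \<subseteq> module.span sm S"
  shows "|B| \<le>o |S|"
proof -
  interpret V: vector_space sm by fact
  obtain S' where S': "S' \<subseteq> S" "V.independent S'" "S \<subseteq> V.span S'"
    using V.maximal_independent_subset by blast
  obtain B' where B': "B \<subseteq> B'" "B' \<subseteq> V.span S" "V.independent B'" "V.span S \<subseteq> V.span B'"
    using V.maximal_independent_subset_extend[OF assms(3)] assms(2) by blast
  have "V.span B' = V.span S'"
    using S' B' by (metis V.span_eq V.span_mono V.span_span dual_order.antisym V.span_superset subset_trans)
  then obtain f where "bij_betw f B' S'" using V.bij_if_span_eq_span_bases B' S' by blast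
  then have "|B'| =o |S'|" by (rule card_of_ordIsoI)
  moreover have "|B| \<le>o |B'|" using B' card_of_mono1 by blast
  moreover have "|S'| \<le>o |S|" using S' card_of_mono1 by blast
  ultimately show ?thesis by (meson ordLeq_ordIso_trans ordLeq_transitive)
qed

lemma wo_max:
  assumes "Well_order r" "finite F" "F \<noteq> {}" "F \<subseteq> Field r"
  shows "\<exists>m\<in>F. \<forall>x\<in>F. (x,m) \<in> r"
  using assms(2,3,4)
proof (induction F rule: finite_ne_induct)
  case (singleton x)
  then show ?case using assms(1) unfolding well_order_on_def linear_order_on_def partial_order_on_def preorder_on_def
    by (auto simp: refl_on_def)
next
  case (insert x F)
  then obtain m where m: "m \<in> F" "\<forall>y\<in>F. (y,m) \<in> r" by auto
  have lin: "Linear_order r" using assms(1) by (simp add: well_order_on_def)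
  have tr: "trans r" using lin unfolding linear_order_on_def partial_order_on_def preorder_on_def by auto
  have tot: "x = m \<or> (x,m) \<in> r \<or> (m,x) \<in> r" using lin insert.prems m(1)
    unfolding linear_order_on_def total_on_def by auto
  have rx: "(x,x) \<in> r" using lin insert.prems
    unfolding linear_order_on_def partial_order_on_def preorder_on_def refl_on_def by auto
  show ?case
  proof (cases "(x,m) \<in> r \<or> x = m")
    case True then show ?thesis using m rx by auto
  next
    case False
    then have "(m,x) \<in> r" using tot by auto
    then show ?thesis using m rx tr unfolding trans_def by (metis insert_iff)
  qed
qed

lemma main_lemma:
  fixes sm :: "'k::{field,perfect_space} \<Rightarrow> 'v::{ab_group_add,topological_space} \<Rightarrow> 'v" and A :: "'c set"
  assumes tv: "tvs sm" and Y: "module.subspace sm Y" and wl: "weight_le A TYPE('v)" and cd: "codim_eq sm Y A"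
  shows "dense_lineable sm A (UNIV - Y)"
proof -
  interpret V: vector_space_pair sm sm using tv unfolding tvs_def vector_space_pair_def by auto
  obtain B where qb: "quotient_basis sm Y B" and BA: "|B| =o |A|" using cd unfolding codim_eq_def by auto
  obtain BB :: "'v set set" where tb: "topological_basis BB" and BBA: "|BB| \<le>o |A|"
    using wl unfolding weight_le_def by auto
  have qi: "\<And>F c. finite F \<Longrightarrow> F \<subseteq> B \<Longrightarrow> (\<Sum>b\<in>F. sm (c b) b) \<in> Y \<Longrightarrow> \<forall>b\<in>F. c b = 0"
   and qs: "V.vs1.span (Y \<union> B) = UNIV" using qb unfolding quotient_basis_def by auto
  obtain C where C: "C \<subseteq> Y" "V.vs1.independent C" "Y \<subseteq> V.vs1.span C"
    using V.vs1.maximal_independent_subset by blast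
  have spC: "V.vs1.span C = Y" using C Y V.vs1.span_minimal by blast
  have BY: "B \<inter> Y = {}"
  proof (rule ccontr)
    assume "B \<inter> Y \<noteq> {}"
    then obtain b where b: "b \<in> B" "b \<in> Y" by auto
    have "\<forall>x\<in>{b}. (\<lambda>_. 1::'k) x = 0" by (rule qi) (use b in auto)
    then show False by simp
  qed
  have indCB: "V.vs1.independent (C \<union> B)"
    unfolding V.vs1.independent_explicit_finite_subsets
  proof (intro allI impI ballI)
    fix S u v assume S: "S \<subseteq> C \<union> B" "finite S" and su: "(\<Sum>v\<in>S. sm (u v) v) = 0" and v: "v \<in> S"
    have split: "(\<Sum>v\<in>S. sm (u v) v) = (\<Sum>v\<in>S \<inter> B. sm (u v) v) + (\<Sum>v\<in>S - B. sm (u v) v)"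
      using S(2) by (metis sum.Int_Diff)
    have s2Y: "(\<Sum>v\<in>S - B. sm (u v) v) \<in> Y"
      unfolding spC[symmetric]
      by (intro V.vs1.span_sum V.vs1.span_scale V.vs1.span_base) (use S in auto)
    have "(\<Sum>v\<in>S \<inter> B. sm (u v) v) = - (\<Sum>v\<in>S - B. sm (u v) v)"
      using su split by (simp add: eq_neg_iff_add_eq_0)
    also have "\<dots> \<in> Y" using s2Y V.vs1.subspace_neg[OF Y] by blast
    finally have z1: "\<forall>b\<in>S \<inter> B. u b = 0" using qi[of "S \<inter> B" u] S by auto
    then have "(\<Sum>v\<in>S \<inter> B. sm (u v) v) = 0" by simp
    then have z2: "(\<Sum>v\<in>S - B. sm (u v) v) = 0" using su split by simp
    have "\<forall>v\<in>S - B. u v = 0"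
      using C(2)[unfolded V.vs1.independent_explicit_finite_subsets] S z2
      by (metis Diff_subset_conv finite_Diff sup_commute)
    then show "u v = 0" using z1 v by auto
  qed
  have indB: "V.vs1.independent B" using V.vs1.independent_mono[OF indCB] by auto
  define p where "p = V.construct (C \<union> B) (\<lambda>x. if x \<in> B then x else 0)"
  have linp: "Vector_Spaces.linear sm sm p" unfolding p_def by (rule V.linear_construct[OF indCB])
  have pB: "\<And>b. b \<in> B \<Longrightarrow> p b = b" unfolding p_def using V.construct_basis[OF indCB] by auto
  have pC: "\<And>c. c \<in> C \<Longrightarrow> p c = 0" unfolding p_def using V.construct_basis[OF indCB] C(1) BY by auto
  have pY: "\<And>y. y \<in> Y \<Longrightarrow> p y = 0"
    using V.linear_eq_0_on_span[OF linp, of C] pC spC by blast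
  have pspan: "\<And>x. p x \<in> V.vs1.span B"
  proof -
    fix x
    have "p x \<in> V.vs1.span ((\<lambda>x. if x \<in> B then x else 0) ` (C \<union> B))"
      unfolding p_def by (rule V.construct_in_span[OF indCB])
    also have "\<dots> \<subseteq> V.vs1.span (insert 0 B)" by (intro V.vs1.span_mono) auto
    finally show "p x \<in> V.vs1.span B" by simp
  qed
  have pid: "\<And>s. s \<in> V.vs1.span B \<Longrightarrow> p s = s"
    using V.linear_eq_on[OF linp V.vs1.linear_id] pB by (metis id_apply)
  have pker: "\<And>x. p x = 0 \<Longrightarrow> x \<in> Y"
  proof -
    fix x assume px: "p x = 0"
    have "x \<in> V.vs1.span (Y \<union> B)" using qs by auto
    then obtain y s where ys: "x = y + s" "y \<in> V.vs1.span Y" "s \<in> V.vs1.span B"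
      unfolding V.vs1.span_Un by auto
    have yY: "y \<in> Y" using ys(2) Y V.vs1.span_eq_iff by blast
    have "p x = p y + p s" using ys(1) V.linear_add[OF linp] by simp
    also have "\<dots> = s" using pY[OF yY] pid[OF ys(3)] by simp
    finally have "s = 0" using px by simp
    then show "x \<in> Y" using ys yY by simp
  qed
  define r where "r = |A|"
  have wo: "wo_rel r" unfolding r_def wo_rel_def by (rule card_of_Well_order)
  have Wr: "Well_order r" unfolding r_def by (rule card_of_Well_order)
  have Fr: "Field r = A" unfolding r_def by (rule Field_card_of)
  have Cr: "Card_order r" unfolding r_def by (rule card_of_Card_order)
  obtain h where h: "inj_on h BB" "h ` BB \<subseteq> A" using BBA card_of_ordLeq by metis
  define U where "U a = (if \<exists>Q\<in>BB. Q \<noteq> {} \<and> h Q = a then (SOME Q. Q \<in> BB \<and> Q \<noteq> {} \<and> h Q = a) else UNIV)" for a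
  have Uo: "\<And>a. open (U a) \<and> U a \<noteq> {}"
  proof -
    fix a show "open (U a) \<and> U a \<noteq> {}"
    proof (cases "\<exists>Q\<in>BB. Q \<noteq> {} \<and> h Q = a")
      case True
      then have "(SOME Q. Q \<in> BB \<and> Q \<noteq> {} \<and> h Q = a) \<in> BB \<and> (SOME Q. Q \<in> BB \<and> Q \<noteq> {} \<and> h Q = a) \<noteq> {}"
        by (metis (mono_tags, lifting) someI_ex)
      then show ?thesis using True topological_basis_open[OF tb] by (simp add: U_def)
    qed (auto simp add: U_def)
  qed
  have UO: "\<And>Q. Q \<in> BB \<Longrightarrow> Q \<noteq> {} \<Longrightarrow> U (h Q) = Q"
  proof -
    fix Q assume Q: "Q \<in> BB" "Q \<noteq> {}"
    have "(SOME Q'. Q' \<in> BB \<and> Q' \<noteq> {} \<and> h Q' = h Q) = Q"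
      by (rule some_equality) (use Q h(1) in \<open>auto simp: inj_on_def\<close>)
    then show "U (h Q) = Q" using Q by (auto simp: U_def)
  qed
  define G where "G S a = (SOME x. x \<in> U a \<and> p x \<notin> V.vs1.span (p ` S))" for S a
  define H where "H = (\<lambda>f a. G (f ` underS r a) a)"
  have adm: "wo_rel.adm_wo r H"
    unfolding wo_rel.adm_wo_def[OF wo] H_def by (metis image_cong)
  define f where "f = wo_rel.worec r H"
  have ffix: "\<And>a. f a = G (f ` underS r a) a"
    using wo_rel.worec_fixpoint[OF wo adm] unfolding f_def H_def by metis
  have room: "\<exists>x. x \<in> U a \<and> p x \<notin> V.vs1.span (p ` f ` underS r a)" if a: "a \<in> A" for a
  proof (rule ccontr)
    let ?S = "p ` f ` underS r a"
    assume "\<not> ?thesis"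
    then have sub: "U a \<subseteq> p -` V.vs1.span ?S" by auto
    have "V.vs1.subspace (p -` V.vs1.span ?S)"
      by (rule V.linear_subspace_vimage[OF linp]) (rule V.vs1.subspace_span)
    moreover obtain u where "u \<in> U a" using Uo by blast
    ultimately have "p -` V.vs1.span ?S = UNIV"
      using tvs_open_subspace[OF tv _ _ _ sub] Uo by blast
    then have "B \<subseteq> V.vs1.span ?S" using pB by (metis UNIV_I subsetI vimageE)
    then have "|B| \<le>o |?S|" using indep_card_le[of sm B ?S] indB by (simp add: V.vs1.vector_space_axioms)
    moreover have "|?S| \<le>o |underS r a|"
      by (metis card_of_image image_comp ordLeq_transitive)
    moreover have "|underS r a| <o r" using card_of_underS[OF Cr] a Fr by blast
    moreover have "r =o |B|" unfolding r_def using BA ordIso_symmetric by blast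
    ultimately show False
      by (meson not_ordLess_ordLeq ordLeq_ordLess_trans ordLess_ordIso_trans ordLeq_transitive)
  qed
  have fa: "\<And>a. a \<in> A \<Longrightarrow> f a \<in> U a \<and> p (f a) \<notin> V.vs1.span (p ` f ` underS r a)"
  proof -
    fix a assume a: "a \<in> A"
    show "f a \<in> U a \<and> p (f a) \<notin> V.vs1.span (p ` f ` underS r a)"
      unfolding ffix[of a] G_def by (rule someI_ex) (rule room[OF a])
  qed
  have lin: "Linear_order r" using Wr by (simp add: well_order_on_def)
  have tot: "\<And>a b. a \<in> A \<Longrightarrow> b \<in> A \<Longrightarrow> a \<noteq> b \<Longrightarrow> a \<in> underS r b \<or> b \<in> underS r a"
    using lin Fr unfolding linear_order_on_def total_on_def underS_def by auto
  have injpf: "inj_on (\<lambda>a. p (f a)) A"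
  proof (rule inj_onI, rule ccontr)
    fix a b assume ab: "a \<in> A" "b \<in> A" "p (f a) = p (f b)" "a \<noteq> b"
    show False
      using tot[OF ab(1,2,4)]
    proof
      assume "a \<in> underS r b"
      then have "p (f a) \<in> V.vs1.span (p ` f ` underS r b)" by (intro V.vs1.span_base) auto
      then show False using fa[OF ab(2)] ab(3) by simp
    next
      assume "b \<in> underS r a"
      then have "p (f b) \<in> V.vs1.span (p ` f ` underS r a)" by (intro V.vs1.span_base) auto
      then show False using fa[OF ab(1)] ab(3) by simp
    qed
  qed
  have fin_ind: "V.vs1.independent (p ` f ` F)" if "finite F" "F \<subseteq> A" for F
    using that
  proof (induction "card F" arbitrary: F rule: less_induct)
    case less
    show ?case
    proof (cases "F = {}")
      case True then show ?thesis using V.vs1.independent_empty by simp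
    next
      case False
      obtain m where m: "m \<in> F" "\<forall>x\<in>F. (x,m) \<in> r"
        using wo_max[OF Wr less.prems(1) False] less.prems(2) Fr by auto
      have c: "card (F - {m}) < card F" by (rule card_Diff1_less[OF less.prems(1) m(1)])
      have IH: "V.vs1.independent (p ` f ` (F - {m}))"
        by (rule less.hyps[OF c]) (use less.prems in auto)
      have "F - {m} \<subseteq> underS r m" using m unfolding underS_def by auto
      then have "V.vs1.span (p ` f ` (F - {m})) \<subseteq> V.vs1.span (p ` f ` underS r m)"
        by (intro V.vs1.span_mono image_mono)
      moreover have "m \<in> A" using m(1) less.prems(2) by blast
      ultimately have nin: "p (f m) \<notin> V.vs1.span (p ` f ` (F - {m}))" using fa[of m] by blast
      have eq: "p ` f ` F = insert (p (f m)) (p ` f ` (F - {m}))" using m by auto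
      show ?thesis unfolding eq using IH nin V.vs1.independent_insertI by blast
    qed
  qed
  have indpf: "V.vs1.independent (p ` (f ` A))"
    unfolding V.vs1.independent_explicit_finite_subsets
  proof (intro allI impI)
    fix S u assume S0: "S \<subseteq> p ` f ` A" "finite S" and su: "(\<Sum>v\<in>S. sm (u v) v) = 0"
    have S: "S \<subseteq> p ` f ` A \<and> finite S" using S0 by blast
    have S1: "S \<subseteq> (\<lambda>a. p (f a)) ` A" using S by (simp add: image_image)
    obtain F where F: "F \<subseteq> A" "finite F" "S = (\<lambda>a. p (f a)) ` F"
      using finite_subset_image[OF _ S1] S by blast
    have "S = p ` f ` F" using F(3) by (simp add: image_image)
    then have "V.vs1.independent S" using fin_ind F(1,2) by blast
    then show "\<forall>v\<in>S. u v = 0"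
      unfolding V.vs1.independent_explicit_finite_subsets using S su by blast
  qed
  have injp: "inj_on p (f ` A)" using injpf unfolding inj_on_def by auto
  have injf: "inj_on f A" using injpf unfolding inj_on_def by auto
  have injspan: "inj_on p (V.vs1.span (f ` A))"
    by (rule V.linear_inj_on_span_independent_image[OF linp indpf injp])
  have indf: "V.vs1.independent (f ` A)"
  proof
    assume "V.vs1.dependent (f ` A)"
    then obtain x where x: "x \<in> f ` A" "x \<in> V.vs1.span (f ` A - {x})"
      unfolding V.vs1.dependent_def by blast
    have "p x \<in> p ` V.vs1.span (f ` A - {x})" using x(2) by blast
    also have "\<dots> = V.vs1.span (p ` (f ` A - {x}))" using V.linear_span_image[OF linp] by simp
    also have "p ` (f ` A - {x}) = p ` f ` A - {p x}" using injp x(1) by (auto simp: inj_on_def)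
    finally have "V.vs1.dependent (p ` f ` A)" unfolding V.vs1.dependent_def using x(1) by blast
    then show False using indpf by blast
  qed
  define Z where "Z = V.vs1.span (f ` A)"
  show ?thesis
    unfolding dense_lineable_def
  proof (intro exI conjI)
    show "V.vs1.subspace Z" unfolding Z_def by (rule V.vs1.subspace_span)
    show "dim_eq sm Z A"
      unfolding dim_eq_def
    proof (intro exI conjI)
      show "\<not> V.vs1.dependent (f ` A)" by (rule indf)
      show "V.vs1.span (f ` A) = Z" by (simp add: Z_def)
      have "bij_betw f A (f ` A)" using injf by (simp add: bij_betw_def)
      then have "|A| =o |f ` A|" by (rule card_of_ordIsoI)
      then show "|f ` A| =o |A|" by (rule ordIso_symmetric)
    qed
    show "Z \<subseteq> (UNIV - Y) \<union> {0}"
    proof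
      fix z assume z: "z \<in> Z"
      show "z \<in> (UNIV - Y) \<union> {0}"
      proof (cases "z \<in> Y")
        case True
        then have "p z = p 0" using pY V.linear_0[OF linp] by simp
        then have "z = 0" using inj_onD[OF injspan] z V.vs1.span_zero unfolding Z_def by blast
        then show ?thesis by simp
      qed simp
    qed
    show "closure Z = UNIV"
    proof (intro set_eqI iffI)
      fix x :: 'v
      show "x \<in> closure Z"
        unfolding closure_iff_nhds_not_empty
      proof (intro allI impI)
        fix T S assume "S \<subseteq> T" "open S" "x \<in> S"
        then obtain Q where Q: "Q \<in> BB" "x \<in> Q" "Q \<subseteq> S" using topological_basisE[OF tb] by blast
        then have "Q \<noteq> {}" by auto
        then have UQ: "U (h Q) = Q" using UO Q(1) by blast
        have hQ: "h Q \<in> A" using h Q by auto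
        have "f (h Q) \<in> Q" using fa[OF hQ] UQ by simp
        moreover have "f (h Q) \<in> Z" unfolding Z_def using hQ by (intro V.vs1.span_base) auto
        ultimately show "Z \<inter> T \<noteq> {}" using Q \<open>S \<subseteq> T\<close> by blast
      qed
    qed simp
  qed
qed

theorem lemma2p1:
  shows "(\<forall>(sm :: real \<Rightarrow> 'a::{ab_group_add,topological_space} \<Rightarrow> 'a) Y (A :: 'c set).
            tvs sm \<and> module.subspace sm Y \<and> weight_le A TYPE('a) \<and> codim_eq sm Y A
            \<longrightarrow> dense_lineable sm A (UNIV - Y))
       \<and> (\<forall>(sm :: complex \<Rightarrow> 'b::{ab_group_add,topological_space} \<Rightarrow> 'b) Y (A :: 'd set).
            tvs sm \<and> module.subspace sm Y \<and> weight_le A TYPE('b) \<and> codim_eq sm Y A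
            \<longrightarrow> dense_lineable sm A (UNIV - Y))"
  by (intro conjI allI impI; elim conjE; rule main_lemma; assumption)

end
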